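(* Let $G$ be a countable even-by-quotient abelian group, let $r_0(G)$ be its torsion free rank and $r_2(G)$ its $2$-rank. Then there is a monomorphism \[f:G\to\bigoplus_{i=1}^{r_0(G)}\mathbb Z[\tfrac12]\oplus\bigoplus_{i=1}^{r_2(G)}\mathbb Z(2^\infty).\] Moreover, given a maximal independent system $L=\{g_i\}_{i=1}^{r_0(G)}\cup\{h_i\}_{i=1}^{r_2(G)}$ of $G$ with the $g_i$ of infinite order and the $h_i$ in the socle of $G$, $f$ can be chosen so that $f(g_i)$ is the element $1$ of the $i$-th $\mathbb Z[\tfrac12]$ summand (and $0$ elsewhere) and $f(h_i)$ is the element of order $2$ of the $i$-th $\mathbb Z(2^\infty)$ summand (and $0$ elsewhere).
   Context: A set of nonzero elements $\{x_j\}$ of an abelian group is independent if $\sum n_jx_j=0$ implies $n_jx_j=0$ for all $j$. $G$ is even-by-quotient if, for $H$ the subgroup generated by a maximal independent system of elements of infinite order, every element of $G/H$ has order a power of $2$. $r_0(G)=\dim_{\mathbb Q}(G\otimes\mathbb Q)$; $r_2(G)$ is the cardinality of a maximal independent system of elements of order $2$. The socle of $G$ is the subgroup of elements whose order is square-free (here: of order $1$ or $2$). $\mathbb Z[\tfrac12]=\{m/2^k\}$ and $\mathbb Z(2^\infty)=\varinjlim(\mathbb Z_2\to\mathbb Z_4\to\cdots)\cong\mathbb Z[\tfrac12]/\mathbb Z$. *)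

theory Defs
  imports Complex_Main "HOL-Library.Countable_Set" "HOL-Library.Extended_Nat"
begin

definition zmul :: "int \<Rightarrow> 'a::ab_group_add \<Rightarrow> 'a" where
  "zmul k x = (if 0 \<le> k then (((+) x) ^^ nat k) 0 else - ((((+) x) ^^ nat (- k)) 0))"

definition independent_set :: "'a::ab_group_add set \<Rightarrow> bool" where
  "independent_set S \<longleftrightarrow> 0 \<notin> S \<and>
     (\<forall>F n. finite F \<and> F \<subseteq> S \<and> (\<Sum>x\<in>F. zmul (n x) x) = 0 \<longrightarrow>
            (\<forall>x\<in>F. zmul (n x) x = 0))"

definition maximal_indep :: "('a::ab_group_add \<Rightarrow> bool) \<Rightarrow> 'a set \<Rightarrow> bool" where
  "maximal_indep P S \<longleftrightarrow> independent_set S \<and> (\<forall>x\<in>S. P x) \<and>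
     (\<forall>S'. S \<subseteq> S' \<and> independent_set S' \<and> (\<forall>x\<in>S'. P x) \<longrightarrow> S' = S)"

definition infinite_order :: "'a::ab_group_add \<Rightarrow> bool" where
  "infinite_order x \<longleftrightarrow> (\<forall>n::nat. n > 0 \<longrightarrow> zmul (int n) x \<noteq> 0)"

definition order_two :: "'a::ab_group_add \<Rightarrow> bool" where
  "order_two x \<longleftrightarrow> x \<noteq> 0 \<and> x + x = 0"

definition socle :: "'a::ab_group_add set" where
  "socle = {x. x + x = 0}"

definition gen_subgroup :: "'a::ab_group_add set \<Rightarrow> 'a set" where
  "gen_subgroup S = {(\<Sum>x\<in>F. zmul (n x) x) | F n. finite F \<and> F \<subseteq> S}"

definition ecard :: "'a set \<Rightarrow> enat" where
  "ecard S = (if finite S then enat (card S) else \<infinity>)"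

definition r0 :: "'a::ab_group_add itself \<Rightarrow> enat" where
  "r0 _ = (SOME r. \<exists>S::'a set. maximal_indep infinite_order S \<and> r = ecard S)"

definition r2 :: "'a::ab_group_add itself \<Rightarrow> enat" where
  "r2 _ = (SOME r. \<exists>S::'a set. maximal_indep order_two S \<and> r = ecard S)"

definition quotient_2primary :: "'a::ab_group_add set \<Rightarrow> bool" where
  "quotient_2primary H \<longleftrightarrow> (\<forall>x. \<exists>k::nat. zmul (2 ^ k) x \<in> H)"

definition even_by_quotient :: "'a::ab_group_add itself \<Rightarrow> bool" where
  "even_by_quotient _ \<longleftrightarrow> (\<exists>S::'a set. maximal_indep infinite_order S \<and>
       quotient_2primary (gen_subgroup S))"

definition dyadic :: "rat \<Rightarrow> bool" where
  "dyadic q \<longleftrightarrow> (\<exists>m::int. \<exists>k::nat. q = of_int m / 2 ^ k)"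

(* The target group  (+)_{i < r0} Z[1/2]  (+)  (+)_{i < r2} Z(2^oo):
   pairs (a, b) of finitely supported sequences; a i in Z[1/2] (support in {i. i < r0}),
   b i a dyadic rational in [0,1) representing Z[1/2]/Z = Z(2^oo) (support in {i. i < r2}). *)
definition target :: "enat \<Rightarrow> enat \<Rightarrow> ((nat \<Rightarrow> rat) \<times> (nat \<Rightarrow> rat)) set" where
  "target m k = {(a, b). finite {i. a i \<noteq> 0} \<and> finite {i. b i \<noteq> 0} \<and>
       (\<forall>i. a i \<noteq> 0 \<longrightarrow> enat i < m) \<and> (\<forall>i. b i \<noteq> 0 \<longrightarrow> enat i < k) \<and>
       (\<forall>i. dyadic (a i)) \<and> (\<forall>i. dyadic (b i) \<and> 0 \<le> b i \<and> b i < 1)}"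

definition target_add :: "(nat \<Rightarrow> rat) \<times> (nat \<Rightarrow> rat) \<Rightarrow> (nat \<Rightarrow> rat) \<times> (nat \<Rightarrow> rat)
    \<Rightarrow> (nat \<Rightarrow> rat) \<times> (nat \<Rightarrow> rat)" where
  "target_add p q = ((\<lambda>i. fst p i + fst q i), (\<lambda>i. frac (snd p i + snd q i)))"

definition monomorphism_into :: "enat \<Rightarrow> enat \<Rightarrow> ('a::ab_group_add \<Rightarrow> (nat \<Rightarrow> rat) \<times> (nat \<Rightarrow> rat)) \<Rightarrow> bool" where
  "monomorphism_into m k f \<longleftrightarrow> inj f \<and> (\<forall>x. f x \<in> target m k) \<and>
       (\<forall>x y. f (x + y) = target_add (f x) (f y))"

end

theory Submission
  imports Defs "HOL-Library.Function_Algebras" "HOL-Library.Product_Plus"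
begin


lemma zmul_nat: "zmul (int n) x = (((+) x) ^^ n) 0"
  by (simp add: zmul_def)

lemma zmul_negnat: "zmul (- int n) x = - ((((+) x) ^^ n) 0)"
  by (cases n) (simp_all add: zmul_def del: of_nat_Suc)

lemma zmul_succ: "zmul (k + 1) x = zmul k x + x"
proof (cases "k \<ge> 0")
  case True
  then obtain n where k: "k = int n" using nonneg_eq_int by blast
  have "zmul (k + 1) x = zmul (int (Suc n)) x" using k by (metis of_nat_Suc add.commute)
  also have "\<dots> = x + (((+) x) ^^ n) 0" unfolding zmul_nat by simp
  finally show ?thesis by (metis add.commute k zmul_nat)
next
  case False
  then obtain n where k: "k = - int (Suc n)"
    by (metis add.inverse_inverse neg_0_le_iff_le nle_le not0_implies_Suc of_nat_0 zero_le_imp_eq_int)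
  have "zmul k x = - (x + (((+) x) ^^ n) 0)" unfolding k zmul_negnat by simp
  moreover have "zmul (k + 1) x = zmul (- int n) x" using k by simp
  ultimately show ?thesis by (simp add: zmul_negnat)
qed

lemma zmul_succ': "zmul (1 + k) x = zmul k x + x"
  using zmul_succ[of k x] by (simp add: add.commute)

lemma zmul_0[simp]: "zmul 0 x = 0" by (simp add: zmul_def)
lemma zmul_1[simp]: "zmul 1 x = x" using zmul_succ[of 0 x] by simp

lemma zmul_pred: "zmul (k - 1) x = zmul k x - x"
  using zmul_succ[of "k - 1" x] by simp
lemma zmul_pred': "zmul (-1 + k) x = zmul k x - x"
  using zmul_pred[of k x] by simp

lemma zmul_add: "zmul (a + b) x = zmul a x + zmul b x"
proof (induction a rule: int_induct[where k=0])
  case base then show ?case by simp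
next
  case (step1 i)
  have "zmul (i + 1 + b) x = zmul ((i + b) + 1) x" by (rule arg_cong[where f="\<lambda>t. zmul t x"]) simp
  also have "\<dots> = zmul (i + b) x + x" by (rule zmul_succ)
  finally show ?case using step1 by (simp add: zmul_succ zmul_succ' ac_simps)
next
  case (step2 i)
  have "zmul (i - 1 + b) x = zmul ((i + b) - 1) x" by (rule arg_cong[where f="\<lambda>t. zmul t x"]) simp
  also have "\<dots> = zmul (i + b) x - x" by (rule zmul_pred)
  finally show ?case using step2 by (simp add: zmul_pred zmul_pred' ac_simps)
qed

lemma zmul_neg: "zmul (- a) x = - zmul a x"
  using zmul_add[of a "-a" x] by (simp add: eq_neg_iff_add_eq_0 add.commute)

lemma zmul_diff: "zmul (a - b) x = zmul a x - zmul b x"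
  using zmul_add[of a "-b" x] by (simp add: zmul_neg)

lemma zmul_2: "zmul 2 x = x + x"
  using zmul_succ[of 1 x] by simp

lemma zmul_right_add: "zmul n (x + y) = zmul n x + zmul n y"
proof (induction n rule: int_induct[where k=0])
  case base then show ?case by simp
next
  case (step1 i) then show ?case by (simp add: zmul_succ zmul_succ' ac_simps)
next
  case (step2 i) then show ?case by (simp add: zmul_pred zmul_pred' algebra_simps)
qed

lemma zmul_zero_right[simp]: "zmul n (0::'a::ab_group_add) = 0"
  using zmul_right_add[of n "0::'a" 0] by simp

lemma zmul_right_neg: "zmul n (- x) = - zmul n x"
  using zmul_right_add[of n x "-x"] by (simp add: eq_neg_iff_add_eq_0 add.commute)

lemma zmul_mult: "zmul (a * b) x = zmul a (zmul b x)"
proof (induction a rule: int_induct[where k=0])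
  case base then show ?case by simp
next
  case (step1 i) then show ?case by (simp add: zmul_succ zmul_succ' zmul_add distrib_right)
next
  case (step2 i) then show ?case by (simp add: zmul_pred zmul_pred' zmul_diff left_diff_distrib)
qed

lemma hom_zmul:
  assumes "\<And>x y. \<phi> (x + y) = \<phi> x + \<phi> y"
  shows "\<phi> (zmul n x) = zmul n (\<phi> x)"
proof -
  have z: "\<phi> 0 = 0" using assms[of 0 0] by (metis add_cancel_right_right)
  have ng: "\<phi> (- y) = - \<phi> y" for y using assms[of y "-y"] z by (simp add: eq_neg_iff_add_eq_0 add.commute)
  show ?thesis
  proof (induction n rule: int_induct[where k=0])
    case base then show ?case by (simp add: z)
  next
    case (step1 i) then show ?case by (simp add: zmul_succ zmul_succ' assms)
  next
    case (step2 i)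
    have df: "\<phi> (a - b) = \<phi> a - \<phi> b" for a b
      by (metis assms ng diff_conv_add_uminus)
    have "\<phi> (zmul (i - 1) x) = \<phi> (zmul i x - x)" by (simp only: zmul_pred)
    also have "\<dots> = zmul i (\<phi> x) - \<phi> x" by (simp only: df step2.IH)
    also have "\<dots> = zmul (i - 1) (\<phi> x)" by (simp only: zmul_pred)
    finally show ?case .
  qed
qed

lemma hom_sum:
  fixes \<phi> :: "'a::ab_group_add \<Rightarrow> 'b::ab_group_add"
  assumes "\<And>x y. \<phi> (x + y) = \<phi> x + \<phi> y"
  shows "\<phi> (sum f A) = (\<Sum>a\<in>A. \<phi> (f a))"
proof -
  have z: "\<phi> 0 = 0" using assms[of 0 0] by (metis add_cancel_right_right)
  show ?thesis
  proof (induction A rule: infinite_finite_induct)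
    case (insert a A) then show ?case by (simp add: assms)
  qed (simp_all add: z)
qed

lemma zmul_rat: "zmul n (q::rat) = of_int n * q"
proof (induction n rule: int_induct[where k=0])
  case base then show ?case by simp
next
  case (step1 i) then show ?case unfolding zmul_succ by (simp add: distrib_right)
next
  case (step2 i) then show ?case unfolding zmul_pred by (simp add: left_diff_distrib)
qed

lemma zmul_fun_apply: "zmul n (v::'b \<Rightarrow> 'c::ab_group_add) i = zmul n (v i)"
  using hom_zmul[of "\<lambda>v. v i" n v] by simp

lemma zmul_fst: "fst (zmul n (p::'b::ab_group_add \<times> 'c::ab_group_add)) = zmul n (fst p)"
  using hom_zmul[of fst n p] by simp
lemma zmul_snd: "snd (zmul n (p::'b::ab_group_add \<times> 'c::ab_group_add)) = zmul n (snd p)"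
  using hom_zmul[of snd n p] by simp

lemma zmul_even: assumes "v + v = 0" shows "zmul (2 * q) v = 0"
proof -
  have "zmul (2 * q) v = zmul q (zmul 2 v)" by (metis mult.commute zmul_mult)
  then show ?thesis by (simp add: zmul_2 assms)
qed

lemma zmul_odd: assumes "v + v = 0" shows "zmul (2 * q + 1) v = v"
  by (simp add: zmul_add zmul_even assms)



definition subgrp :: "'a::ab_group_add set \<Rightarrow> bool" where
  "subgrp D \<longleftrightarrow> 0 \<in> D \<and> (\<forall>x\<in>D. \<forall>y\<in>D. x + y \<in> D) \<and> (\<forall>x\<in>D. - x \<in> D)"

lemma subgrp_0: "subgrp D \<Longrightarrow> 0 \<in> D" by (simp add: subgrp_def)
lemma subgrp_add: "subgrp D \<Longrightarrow> x \<in> D \<Longrightarrow> y \<in> D \<Longrightarrow> x + y \<in> D" by (simp add: subgrp_def)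
lemma subgrp_neg: "subgrp D \<Longrightarrow> x \<in> D \<Longrightarrow> - x \<in> D" by (simp add: subgrp_def)
lemma subgrp_diff: "subgrp D \<Longrightarrow> x \<in> D \<Longrightarrow> y \<in> D \<Longrightarrow> x - y \<in> D"
  using subgrp_add[of D x "-y"] subgrp_neg[of D y] by simp

lemma subgrp_zmul: assumes "subgrp D" "x \<in> D" shows "zmul n x \<in> D"
proof (induction n rule: int_induct[where k=0])
  case base then show ?case using assms by (simp add: subgrp_0)
next
  case (step1 i) then show ?case using assms by (simp add: zmul_succ subgrp_add)
next
  case (step2 i) then show ?case using assms by (simp add: zmul_pred subgrp_diff)
qed

lemma subgrp_sum: assumes "subgrp D" "\<And>x. x \<in> F \<Longrightarrow> f x \<in> D" shows "sum f F \<in> D"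
  using assms(2)
proof (induction F rule: infinite_finite_induct)
  case (insert a A) then show ?case using assms(1) by (simp add: subgrp_add)
qed (use assms(1) subgrp_0 in auto)

lemma gs_ext:
  assumes "finite F'" "F \<subseteq> F'"
  shows "(\<Sum>x\<in>F. zmul (n x) x) = (\<Sum>x\<in>F'. zmul (if x \<in> F then n x else 0) x)"
  by (rule sum.mono_neutral_cong_left) (use assms in auto)

lemma gs_memI: "finite F \<Longrightarrow> F \<subseteq> S \<Longrightarrow> (\<Sum>x\<in>F. zmul (n x) x) \<in> gen_subgroup S"
  unfolding gen_subgroup_def by blast

lemma gs_memE:
  assumes "z \<in> gen_subgroup S"
  obtains F n where "finite F" "F \<subseteq> S" "z = (\<Sum>x\<in>F. zmul (n x) x)"
  using assms unfolding gen_subgroup_def by blast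

lemma gs_base: "x \<in> S \<Longrightarrow> x \<in> gen_subgroup S"
  using gs_memI[of "{x}" S "\<lambda>_. 1"] by simp

lemma gs_subgrp: "subgrp (gen_subgroup S)"
  unfolding subgrp_def
proof (intro conjI ballI)
  show "0 \<in> gen_subgroup S" using gs_memI[of "{}" S] by simp
next
  fix a b assume a: "a \<in> gen_subgroup S" and b: "b \<in> gen_subgroup S"
  obtain F1 n1 where 1: "finite F1" "F1 \<subseteq> S" "a = (\<Sum>x\<in>F1. zmul (n1 x) x)" using a by (rule gs_memE)
  obtain F2 n2 where 2: "finite F2" "F2 \<subseteq> S" "b = (\<Sum>x\<in>F2. zmul (n2 x) x)" using b by (rule gs_memE)
  have "a = (\<Sum>x\<in>F1 \<union> F2. zmul (if x \<in> F1 then n1 x else 0) x)" using 1 2 gs_ext[of "F1 \<union> F2" F1] by simp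
  moreover have "b = (\<Sum>x\<in>F1 \<union> F2. zmul (if x \<in> F2 then n2 x else 0) x)" using 1 2 gs_ext[of "F1 \<union> F2" F2] by simp
  ultimately have "a + b = (\<Sum>x\<in>F1 \<union> F2. zmul ((if x \<in> F1 then n1 x else 0) + (if x \<in> F2 then n2 x else 0)) x)"
    by (simp add: zmul_add sum.distrib)
  then show "a + b \<in> gen_subgroup S" using 1 2 gs_memI[of "F1 \<union> F2" S] by simp
next
  fix a assume a: "a \<in> gen_subgroup S"
  obtain F1 n1 where 1: "finite F1" "F1 \<subseteq> S" "a = (\<Sum>x\<in>F1. zmul (n1 x) x)" using a by (rule gs_memE)
  have "- a = (\<Sum>x\<in>F1. zmul (- n1 x) x)" using 1 by (simp add: zmul_neg sum_negf)
  then show "- a \<in> gen_subgroup S" using 1 gs_memI[of F1 S] by simp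
qed

lemma gs_least: assumes "subgrp D" "S \<subseteq> D" shows "gen_subgroup S \<subseteq> D"
proof
  fix z assume "z \<in> gen_subgroup S"
  then obtain F n where "finite F" "F \<subseteq> S" "z = (\<Sum>x\<in>F. zmul (n x) x)" by (rule gs_memE)
  then show "z \<in> D" using assms by (auto intro!: subgrp_sum subgrp_zmul)
qed

lemma gs_mono: "S \<subseteq> T \<Longrightarrow> gen_subgroup S \<subseteq> gen_subgroup T"
  unfolding gen_subgroup_def by blast

lemmas gs_add = subgrp_add[OF gs_subgrp]
lemmas gs_neg = subgrp_neg[OF gs_subgrp]
lemmas gs_diff = subgrp_diff[OF gs_subgrp]
lemmas gs_zero = subgrp_0[OF gs_subgrp]
lemmas gs_zmul = subgrp_zmul[OF gs_subgrp]

lemma indep_gen: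
  assumes ind: "independent_set L" and A: "A \<subseteq> L" and B: "finite B" "B \<subseteq> L - A"
    and z: "(\<Sum>x\<in>B. zmul (c x) x) \<in> gen_subgroup A"
  shows "\<forall>x\<in>B. zmul (c x) x = 0"
proof -
  obtain F n where F: "finite F" "F \<subseteq> A" "(\<Sum>x\<in>B. zmul (c x) x) = (\<Sum>x\<in>F. zmul (n x) x)"
    using z by (rule gs_memE)
  define n' where "n' x = (if x \<in> B then c x else - n x)" for x
  have disj: "B \<inter> F = {}" using B F by auto
  have "(\<Sum>x\<in>B \<union> F. zmul (n' x) x) = (\<Sum>x\<in>B. zmul (n' x) x) + (\<Sum>x\<in>F. zmul (n' x) x)"
    using B F disj by (simp add: sum.union_disjoint)
  also have "(\<Sum>x\<in>B. zmul (n' x) x) = (\<Sum>x\<in>B. zmul (c x) x)" by (simp add: n'_def)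
  also have "(\<Sum>x\<in>F. zmul (n' x) x) = (\<Sum>x\<in>F. - zmul (n x) x)"
    using disj by (intro sum.cong) (auto simp: n'_def zmul_neg)
  also have "\<dots> = - (\<Sum>x\<in>F. zmul (n x) x)" by (simp add: sum_negf)
  finally have "(\<Sum>x\<in>B \<union> F. zmul (n' x) x) = 0" using F(3) by simp
  then have "\<forall>x\<in>B \<union> F. zmul (n' x) x = 0"
    using ind B F A unfolding independent_set_def by (meson Un_least finite_UnI le_supI2 order_trans Diff_subset)
  then show ?thesis unfolding n'_def by (metis UnI1)
qed

lemma indep_one:
  assumes "independent_set L" "A \<subseteq> L" "l \<in> L" "l \<notin> A" "zmul a l \<in> gen_subgroup A"
  shows "zmul a l = 0"
  using indep_gen[of L A "{l}" "\<lambda>_. a"] assms by auto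

lemma indep_two:
  assumes "independent_set L" "A \<subseteq> L" "l \<in> L" "l \<notin> A" "l0 \<in> L" "l0 \<notin> A" "l \<noteq> l0"
    "zmul a l + zmul b l0 \<in> gen_subgroup A"
  shows "zmul a l = 0"
  using indep_gen[of L A "{l, l0}" "\<lambda>x. if x = l then a else b"] assms by auto

lemma dep_lemma:
  assumes ind: "independent_set L" and zL: "z \<notin> L" and z0: "z \<noteq> 0"
    and dep: "\<not> independent_set (insert z L)"
  shows "\<exists>c. zmul c z \<noteq> 0 \<and> zmul c z \<in> gen_subgroup L"
proof -
  have 0: "0 \<notin> L" using ind by (simp add: independent_set_def)
  obtain F n where F: "finite F" "F \<subseteq> insert z L" "(\<Sum>x\<in>F. zmul (n x) x) = 0"
    and nz: "\<exists>x\<in>F. zmul (n x) x \<noteq> 0"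
    using dep 0 z0 unfolding independent_set_def by blast
  show ?thesis
  proof (cases "z \<in> F")
    case False
    then have "F \<subseteq> L" using F by auto
    then show ?thesis using ind F nz unfolding independent_set_def by blast
  next
    case True
    let ?F0 = "F - {z}"
    have F0L: "?F0 \<subseteq> L" using F by auto
    have sp: "(\<Sum>x\<in>F. zmul (n x) x) = zmul (n z) z + (\<Sum>x\<in>?F0. zmul (n x) x)"
      using True F(1) by (simp add: sum.remove)
    show ?thesis
    proof (cases "zmul (n z) z = 0")
      case True
      then have "(\<Sum>x\<in>?F0. zmul (n x) x) = 0" using sp F by simp
      then have "\<forall>x\<in>?F0. zmul (n x) x = 0" using ind F0L F(1) unfolding independent_set_def by blast
      then show ?thesis using nz True by auto
    next
      case False
      have "zmul (n z) z = (\<Sum>x\<in>?F0. zmul (- n x) x)"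
        using sp F by (simp add: zmul_neg sum_negf eq_neg_iff_add_eq_0)
      also have "\<dots> \<in> gen_subgroup L" using F0L F(1) by (intro gs_memI) auto
      finally show ?thesis using False by blast
    qed
  qed
qed



definition phom :: "('a::ab_group_add \<times> 'b::ab_group_add) set \<Rightarrow> 'b set \<Rightarrow> bool" where
  "phom R V \<longleftrightarrow> (\<forall>x y z. (x,y) \<in> R \<longrightarrow> (x,z) \<in> R \<longrightarrow> y = z) \<and> (\<forall>x y. (x,y) \<in> R \<longrightarrow> y \<in> V) \<and>
     (\<forall>x y x' y'. (x,y) \<in> R \<longrightarrow> (x',y') \<in> R \<longrightarrow> (x + x', y + y') \<in> R) \<and>
     (\<forall>x \<in> Domain R. - x \<in> Domain R) \<and> (0, 0) \<in> R"

lemma phom_fun: "phom R V \<Longrightarrow> (x,y) \<in> R \<Longrightarrow> (x,z) \<in> R \<Longrightarrow> y = z" by (simp add: phom_def)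
lemma phom_V: "phom R V \<Longrightarrow> (x,y) \<in> R \<Longrightarrow> y \<in> V" by (simp add: phom_def)
lemma phom_add: "phom R V \<Longrightarrow> (x,y) \<in> R \<Longrightarrow> (x',y') \<in> R \<Longrightarrow> (x + x', y + y') \<in> R" by (simp add: phom_def)
lemma phom_negdom: "phom R V \<Longrightarrow> x \<in> Domain R \<Longrightarrow> - x \<in> Domain R" by (simp add: phom_def)
lemma phom_00: "phom R V \<Longrightarrow> (0, 0) \<in> R" by (simp add: phom_def)

lemma phom_neg: assumes "phom R V" "(x,y) \<in> R" shows "(- x, - y) \<in> R"
proof -
  obtain w where w: "(- x, w) \<in> R" using phom_negdom[OF assms(1)] assms(2) by blast
  have "(x + - x, y + w) \<in> R" using phom_add[OF assms(1) assms(2) w] .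
  then have "y + w = 0" using phom_fun[OF assms(1)] phom_00[OF assms(1)] by simp
  then have "w = - y" by (simp add: eq_neg_iff_add_eq_0 add.commute)
  then show ?thesis using w by simp
qed

lemma phom_diff: assumes "phom R V" "(x,y) \<in> R" "(x',y') \<in> R" shows "(x - x', y - y') \<in> R"
  using phom_add[OF assms(1) assms(2) phom_neg[OF assms(1) assms(3)]] by simp

lemma phom_zmul: assumes "phom R V" "(x,y) \<in> R" shows "(zmul n x, zmul n y) \<in> R"
proof (induction n rule: int_induct[where k=0])
  case base then show ?case using phom_00[OF assms(1)] by simp
next
  case (step1 i) then show ?case using phom_add[OF assms(1) _ assms(2)] by (simp add: zmul_succ)
next
  case (step2 i) then show ?case using phom_diff[OF assms(1) _ assms(2)] by (simp add: zmul_pred)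
qed

lemma phom_dom_subgrp: assumes "phom R V" shows "subgrp (Domain R)"
  unfolding subgrp_def using phom_00[OF assms] phom_add[OF assms] phom_negdom[OF assms] by blast

definition extR :: "('a::ab_group_add \<times> 'b::ab_group_add) set \<Rightarrow> 'a \<Rightarrow> 'b \<Rightarrow> ('a \<times> 'b) set" where
  "extR R x y = {(d + zmul n x, v + zmul n y) | d v n. (d, v) \<in> R}"

lemma extR_sub: "R \<subseteq> extR R x y"
proof
  fix p assume "p \<in> R"
  moreover obtain d v where "p = (d, v)" by fastforce
  ultimately have "p = (d + zmul 0 x, v + zmul 0 y) \<and> (d, v) \<in> R" by simp
  then show "p \<in> extR R x y" unfolding extR_def by blast
qed

lemma extR_new: "phom R V \<Longrightarrow> (x, y) \<in> extR R x y"
  unfolding extR_def using phom_00[of R V] by (force intro!: exI[of _ 0] exI[of _ 1])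

lemma extR_dom: "Domain (extR R x y) = {d + zmul n x | d n. d \<in> Domain R}"
  unfolding extR_def by auto

lemma extR_phom:
  assumes R: "phom R V" and V: "subgrp V" and y: "y \<in> V"
    and cond: "\<And>n. zmul n x \<in> Domain R \<Longrightarrow> (zmul n x, zmul n y) \<in> R"
  shows "phom (extR R x y) V"
  unfolding phom_def
proof (intro conjI allI impI ballI)
  fix a b c assume ab: "(a, b) \<in> extR R x y" and ac: "(a, c) \<in> extR R x y"
  obtain d v n where 1: "a = d + zmul n x" "b = v + zmul n y" "(d,v) \<in> R" using ab unfolding extR_def by blast
  obtain d' v' n' where 2: "a = d' + zmul n' x" "c = v' + zmul n' y" "(d',v') \<in> R" using ac unfolding extR_def by blast
  have "zmul (n - n') x = d' - d" using 1 2 by (simp add: zmul_diff algebra_simps)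
  moreover have "(d' - d, v' - v) \<in> R" using phom_diff[OF R 2(3) 1(3)] .
  ultimately have "(zmul (n - n') x, v' - v) \<in> R" by simp
  moreover have "(zmul (n - n') x, zmul (n - n') y) \<in> R"
    using cond[of "n - n'"] \<open>(zmul (n - n') x, v' - v) \<in> R\<close> by blast
  ultimately have "zmul (n - n') y = v' - v" using phom_fun[OF R] by blast
  then show "b = c" using 1 2 by (simp add: zmul_diff algebra_simps)
next
  fix a b assume ab: "(a, b) \<in> extR R x y"
  obtain d v n where 1: "a = d + zmul n x" "b = v + zmul n y" "(d,v) \<in> R" using ab unfolding extR_def by blast
  have "zmul n y \<in> V" using subgrp_zmul[OF V y] .
  then show "b \<in> V" using 1 phom_V[OF R 1(3)] V by (simp add: subgrp_add)
next
  fix a b a' b' assume ab: "(a, b) \<in> extR R x y" and ab': "(a', b') \<in> extR R x y"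
  obtain d v n where 1: "a = d + zmul n x" "b = v + zmul n y" "(d,v) \<in> R" using ab unfolding extR_def by blast
  obtain d' v' n' where 2: "a' = d' + zmul n' x" "b' = v' + zmul n' y" "(d',v') \<in> R" using ab' unfolding extR_def by blast
  have "(d + d', v + v') \<in> R" using phom_add[OF R 1(3) 2(3)] .
  moreover have "a + a' = (d + d') + zmul (n + n') x" "b + b' = (v + v') + zmul (n + n') y"
    using 1 2 by (simp_all add: zmul_add algebra_simps)
  ultimately show "(a + a', b + b') \<in> extR R x y" unfolding extR_def by blast
next
  fix a assume "a \<in> Domain (extR R x y)"
  then obtain b where ab: "(a, b) \<in> extR R x y" by blast
  obtain d v n where 1: "a = d + zmul n x" "b = v + zmul n y" "(d,v) \<in> R" using ab unfolding extR_def by blast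
  have "(- d, - v) \<in> R" using phom_neg[OF R 1(3)] .
  moreover have "- a = - d + zmul (- n) x" using 1 by (simp add: zmul_neg)
  ultimately have "(- a, - v + zmul (- n) y) \<in> extR R x y" unfolding extR_def by blast
  then show "- a \<in> Domain (extR R x y)" by blast
next
  show "(0, 0) \<in> extR R x y" using extR_sub phom_00[OF R] by blast
qed



lemma pow2_dvd: "(d::nat) dvd 2 ^ e \<Longrightarrow> \<exists>j\<le>e. d = 2 ^ j"
proof (induction e arbitrary: d)
  case 0 then show ?case by simp
next
  case (Suc e)
  show ?case
  proof (cases "even d")
    case True
    then obtain d' where d: "d = 2 * d'" by blast
    then have "d' dvd 2 ^ e" using Suc.prems by simp
    then obtain j where "j \<le> e" "d' = 2 ^ j" using Suc.IH by blast
    then show ?thesis using d by (intro exI[of _ "Suc j"]) simp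
  next
    case False
    then have "coprime d 2" by (simp add: coprime_commute)
    then have "d dvd 2 ^ e" using Suc.prems by (simp add: coprime_dvd_mult_right_iff)
    then show ?thesis using Suc.IH by (meson le_Suc_eq)
  qed
qed

lemma halfpow:
  assumes hV: "\<And>v. v \<in> V \<Longrightarrow> half v \<in> V" and hh: "\<And>v. v \<in> V \<Longrightarrow> half v + half v = v"
  shows "v \<in> V \<Longrightarrow> (half ^^ e) v \<in> V \<and> zmul (2 ^ e) ((half ^^ e) v) = v"
proof (induction e arbitrary: v)
  case 0 then show ?case by simp
next
  case (Suc e)
  have eq: "(half ^^ Suc e) v = (half ^^ e) (half v)" by (simp only: funpow_Suc_right comp_def)
  have IH: "(half ^^ e) (half v) \<in> V \<and> zmul (2 ^ e) ((half ^^ e) (half v)) = half v"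
    using Suc.IH hV Suc.prems by blast
  have "zmul (2 ^ Suc e) ((half ^^ e) (half v)) = zmul 2 (zmul (2 ^ e) ((half ^^ e) (half v)))"
    by (simp add: zmul_mult[symmetric])
  also have "\<dots> = v" using IH hh Suc.prems by (simp add: zmul_2)
  finally show ?case using eq IH by simp
qed

theorem ext_exists:
  fixes L :: "'a::ab_group_add set" and val :: "'a \<Rightarrow> 'b::ab_group_add" and V :: "'b set"
  assumes ind: "independent_set L"
    and tp: "\<And>x. \<exists>k::nat. zmul (2 ^ k) x \<in> gen_subgroup L"
    and valV: "\<And>l. l \<in> L \<Longrightarrow> val l \<in> V"
    and valtor: "\<And>l n. l \<in> L \<Longrightarrow> zmul n l = 0 \<Longrightarrow> zmul n (val l) = 0"
    and V: "subgrp V" and hV: "\<And>v. v \<in> V \<Longrightarrow> half v \<in> V"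
    and hh: "\<And>v. v \<in> V \<Longrightarrow> half v + half v = v"
  shows "\<exists>F. (\<forall>x y. F (x + y) = F x + F y) \<and> (\<forall>x. F x \<in> V) \<and> (\<forall>l\<in>L. F l = val l)"
proof -
  define \<A> where "\<A> = {R. phom R V \<and> (\<forall>l\<in>L. l \<in> Domain R \<longrightarrow> (l, val l) \<in> R) \<and>
      (\<forall>z\<in>Domain R. z \<in> gen_subgroup L \<longrightarrow> z \<in> gen_subgroup (L \<inter> Domain R))}"
  have zL: "0 \<notin> L" using ind by (simp add: independent_set_def)
  have "\<exists>M\<in>\<A>. \<forall>X\<in>\<A>. M \<subseteq> X \<longrightarrow> X = M"
  proof (rule subset_Zorn)
    fix C assume ch: "subset.chain \<A> C"
    show "\<exists>U\<in>\<A>. \<forall>X\<in>C. X \<subseteq> U"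
    proof (cases "C = {}")
      case True
      have "phom {(0,0)} V" unfolding phom_def using V by (auto simp: subgrp_0)
      then have "{(0,0)} \<in> \<A>" unfolding \<A>_def using zL gs_zero by auto
      then show ?thesis using True by blast
    next
      case False
      have CA: "C \<subseteq> \<A>" and tot: "\<And>X Y. X \<in> C \<Longrightarrow> Y \<in> C \<Longrightarrow> X \<subseteq> Y \<or> Y \<subseteq> X"
        using ch by (auto simp: subset_chain_def)
      have ph: "\<And>R. R \<in> C \<Longrightarrow> phom R V" using CA unfolding \<A>_def by blast
      have two: "\<And>p q. p \<in> \<Union>C \<Longrightarrow> q \<in> \<Union>C \<Longrightarrow> \<exists>R\<in>C. p \<in> R \<and> q \<in> R"
        using tot by blast
      have "phom (\<Union>C) V"
        unfolding phom_def
      proof (intro conjI allI impI ballI)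
        fix x y z assume "(x, y) \<in> \<Union>C" "(x, z) \<in> \<Union>C"
        then obtain R where "R \<in> C" "(x,y) \<in> R" "(x,z) \<in> R" using two by blast
        then show "y = z" using ph phom_fun by metis
      next
        fix x y assume "(x, y) \<in> \<Union>C"
        then show "y \<in> V" using ph phom_V by blast
      next
        fix x y x' y' assume "(x, y) \<in> \<Union>C" "(x', y') \<in> \<Union>C"
        then obtain R where "R \<in> C" "(x,y) \<in> R" "(x',y') \<in> R" using two by blast
        then show "(x + x', y + y') \<in> \<Union>C" using ph phom_add by blast
      next
        fix x assume "x \<in> Domain (\<Union>C)"
        then obtain R where "R \<in> C" "x \<in> Domain R" by blast
        then show "- x \<in> Domain (\<Union>C)" using ph phom_negdom by blast
      next
        obtain R where "R \<in> C" using False by blast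
        then show "(0, 0) \<in> \<Union>C" using ph phom_00 by blast
      qed
      moreover have "\<forall>l\<in>L. l \<in> Domain (\<Union>C) \<longrightarrow> (l, val l) \<in> \<Union>C"
      proof (intro ballI impI)
        fix l assume "l \<in> L" "l \<in> Domain (\<Union>C)"
        then obtain R where "R \<in> C" "l \<in> Domain R" by blast
        then show "(l, val l) \<in> \<Union>C" using CA \<open>l \<in> L\<close> unfolding \<A>_def by blast
      qed
      moreover have "\<forall>z\<in>Domain (\<Union>C). z \<in> gen_subgroup L \<longrightarrow> z \<in> gen_subgroup (L \<inter> Domain (\<Union>C))"
      proof (intro ballI impI)
        fix z assume "z \<in> Domain (\<Union>C)" "z \<in> gen_subgroup L"
        then obtain R where R: "R \<in> C" "z \<in> Domain R" by blast
        then have "z \<in> gen_subgroup (L \<inter> Domain R)" using CA \<open>z \<in> gen_subgroup L\<close> unfolding \<A>_def by blast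
        moreover have "gen_subgroup (L \<inter> Domain R) \<subseteq> gen_subgroup (L \<inter> Domain (\<Union>C))"
          using R by (intro gs_mono) blast
        ultimately show "z \<in> gen_subgroup (L \<inter> Domain (\<Union>C))" by blast
      qed
      ultimately have "\<Union>C \<in> \<A>" unfolding \<A>_def by blast
      then show ?thesis by blast
    qed
  qed
  then obtain M where MA: "M \<in> \<A>" and Mmax: "\<And>X. X \<in> \<A> \<Longrightarrow> M \<subseteq> X \<Longrightarrow> X = M" by blast
  have M: "phom M V" and Mlv: "\<And>l. l \<in> L \<Longrightarrow> l \<in> Domain M \<Longrightarrow> (l, val l) \<in> M"
    and Mgs: "\<And>z. z \<in> Domain M \<Longrightarrow> z \<in> gen_subgroup L \<Longrightarrow> z \<in> gen_subgroup (L \<inter> Domain M)"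
    using MA unfolding \<A>_def by auto
  have DM: "subgrp (Domain M)" using phom_dom_subgrp[OF M] .
  have "Domain M = UNIV"
  proof (rule ccontr)
    assume "Domain M \<noteq> UNIV"
    then obtain x0 where x0: "x0 \<notin> Domain M" by blast
    show False
    proof (cases "L \<subseteq> Domain M")
      case False
      then obtain l0 where l0: "l0 \<in> L" "l0 \<notin> Domain M" by blast
      define R' where "R' = extR M l0 (val l0)"
      have cond: "(zmul n l0, zmul n (val l0)) \<in> M" if "zmul n l0 \<in> Domain M" for n
      proof -
        have "zmul n l0 \<in> gen_subgroup L" using l0 by (simp add: gs_zmul gs_base)
        then have "zmul n l0 \<in> gen_subgroup (L \<inter> Domain M)" using Mgs that by blast
        then have "zmul n l0 = 0" using indep_one[OF ind, of "L \<inter> Domain M" l0 n] l0 by blast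
        then show ?thesis using valtor[OF l0(1)] phom_00[OF M] by simp
      qed
      have R'ph: "phom R' V" unfolding R'_def by (rule extR_phom[OF M V valV[OF l0(1)] cond])
      have MR': "M \<subseteq> R'" unfolding R'_def by (rule extR_sub)
      have l0R': "(l0, val l0) \<in> R'" unfolding R'_def by (rule extR_new[OF M])
      have domM: "Domain M \<subseteq> Domain R'" using MR' by blast
      have "R' \<in> \<A>" unfolding \<A>_def
      proof (intro CollectI conjI ballI impI)
        show "phom R' V" by (rule R'ph)
      next
        fix l assume l: "l \<in> L" "l \<in> Domain R'"
        show "(l, val l) \<in> R'"
        proof (cases "l \<in> Domain M")
          case True then show ?thesis using Mlv l MR' by blast
        next
          case lM: False
          show ?thesis
          proof (cases "l = l0")
            case True then show ?thesis using l0R' by simp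
          next
            case False
            obtain d n where dn: "l = d + zmul n l0" "d \<in> Domain M"
              using l(2) unfolding R'_def extR_dom by blast
            have "d \<in> gen_subgroup L"
              using dn l l0 by (metis add_diff_cancel gs_base gs_diff gs_zmul)
            then have "d \<in> gen_subgroup (L \<inter> Domain M)" using Mgs dn by blast
            moreover have "d = zmul 1 l + zmul (- n) l0" using dn by (simp add: zmul_neg)
            ultimately have "zmul 1 l = 0"
              using indep_two[OF ind, of "L \<inter> Domain M" l l0 1 "-n"] l l0 lM False by auto
            then show ?thesis using zL l by simp
          qed
        qed
      next
        fix z assume z: "z \<in> Domain R'" "z \<in> gen_subgroup L"
        obtain d n where dn: "z = d + zmul n l0" "d \<in> Domain M"
          using z(1) unfolding R'_def extR_dom by blast
        have "d \<in> gen_subgroup L"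
          using dn z l0 by (metis add_diff_cancel gs_base gs_diff gs_zmul)
        then have "d \<in> gen_subgroup (L \<inter> Domain M)" using Mgs dn by blast
        also have "\<dots> \<subseteq> gen_subgroup (L \<inter> Domain R')" using domM by (intro gs_mono) blast
        finally have d: "d \<in> gen_subgroup (L \<inter> Domain R')" .
        have "l0 \<in> L \<inter> Domain R'" using l0 l0R' by blast
        then have "zmul n l0 \<in> gen_subgroup (L \<inter> Domain R')" by (simp add: gs_zmul gs_base)
        then show "z \<in> gen_subgroup (L \<inter> Domain R')" using d dn by (simp add: gs_add)
      qed
      then have "R' = M" using Mmax MR' by blast
      then show False using l0R' l0 by blast
    next
      case True
      have gsD: "gen_subgroup L \<subseteq> Domain M" using gs_least[OF DM True] .
      obtain k :: nat where "zmul (2 ^ k) x0 \<in> gen_subgroup L" using tp by blast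
      then have ex: "zmul (2 ^ k) x0 \<in> Domain M" using gsD by blast
      define e where "e = (LEAST e::nat. zmul (2 ^ e) x0 \<in> Domain M)"
      have e1: "zmul (2 ^ e) x0 \<in> Domain M" unfolding e_def using ex by (rule LeastI)
      have e2: "\<And>j. zmul (2 ^ j) x0 \<in> Domain M \<Longrightarrow> e \<le> j" unfolding e_def by (rule Least_le)
      obtain w where w: "(zmul (2 ^ e) x0, w) \<in> M" using e1 by blast
      have wV: "w \<in> V" using phom_V[OF M w] .
      define y where "y = (half ^^ e) w"
      have yV: "y \<in> V" and yw: "zmul (2 ^ e) y = w"
        using halfpow[OF hV hh wV, of e] unfolding y_def by auto
      have cond: "(zmul n x0, zmul n y) \<in> M" if nD: "zmul n x0 \<in> Domain M" for n
      proof -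
        obtain u v where uv: "u * n + v * 2 ^ e = gcd n (2 ^ e)" using bezout_int by blast
        define d where "d = gcd n (2 ^ e)"
        have "zmul d x0 = zmul u (zmul n x0) + zmul v (zmul (2 ^ e) x0)"
          using uv unfolding d_def by (metis zmul_add zmul_mult)
        then have dD: "zmul d x0 \<in> Domain M" using nD e1 DM by (simp add: subgrp_add subgrp_zmul)
        have dpos: "d > 0" unfolding d_def by simp
        have "d dvd 2 ^ e" unfolding d_def by simp
        then have "nat d dvd 2 ^ e" using dpos by (simp add: nat_dvd_iff)
        then obtain j where "nat d = 2 ^ j" using pow2_dvd by blast
        moreover have "d = int (nat d)" using dpos by simp
        ultimately have dj: "d = 2 ^ j" by simp
        then have "e \<le> j" using dD e2 by blast
        then have "(2::int) ^ e dvd d" using dj by (simp add: le_imp_power_dvd)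
        also have "d dvd n" unfolding d_def by simp
        finally obtain q where q: "n = 2 ^ e * q" by blast
        have "(zmul q (zmul (2 ^ e) x0), zmul q w) \<in> M" using phom_zmul[OF M w] .
        moreover have "zmul n x0 = zmul q (zmul (2 ^ e) x0)" using q by (metis mult.commute zmul_mult)
        moreover have "zmul n y = zmul q w" using q yw by (metis mult.commute zmul_mult)
        ultimately show ?thesis by simp
      qed
      define R' where "R' = extR M x0 y"
      have R'ph: "phom R' V" unfolding R'_def by (rule extR_phom[OF M V yV cond])
      have MR': "M \<subseteq> R'" unfolding R'_def by (rule extR_sub)
      have x0R': "(x0, y) \<in> R'" unfolding R'_def by (rule extR_new[OF M])
      have "R' \<in> \<A>" unfolding \<A>_def
      proof (intro CollectI conjI ballI impI)
        show "phom R' V" by (rule R'ph)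
      next
        fix l assume l: "l \<in> L" "l \<in> Domain R'"
        then show "(l, val l) \<in> R'" using Mlv True MR' by blast
      next
        fix z assume z: "z \<in> Domain R'" "z \<in> gen_subgroup L"
        have "L \<inter> Domain R' = L" using True MR' by blast
        then show "z \<in> gen_subgroup (L \<inter> Domain R')" using z by simp
      qed
      then have "R' = M" using Mmax MR' by blast
      then show False using x0R' x0 by blast
    qed
  qed
  define F where "F x = (THE y. (x, y) \<in> M)" for x
  have FM: "(x, F x) \<in> M" for x
  proof -
    obtain y where y: "(x, y) \<in> M" using \<open>Domain M = UNIV\<close> by blast
    have "(THE y. (x, y) \<in> M) = y" using y phom_fun[OF M] by blast
    then show ?thesis using y unfolding F_def by simp
  qed
  have "\<forall>x y. F (x + y) = F x + F y"
    using FM phom_add[OF M] phom_fun[OF M] by blast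
  moreover have "\<forall>x. F x \<in> V" using FM phom_V[OF M] by blast
  moreover have "\<forall>l\<in>L. F l = val l" using FM Mlv phom_fun[OF M] by blast
  ultimately show ?thesis by blast
qed



typedef circ = "{q::rat. 0 \<le> q \<and> q < 1}" morphisms rep_circ abs_circ
  by (rule exI[of _ 0]) simp

setup_lifting type_definition_circ

instantiation circ :: ab_group_add
begin
lift_definition zero_circ :: circ is 0 by simp
lift_definition plus_circ :: "circ \<Rightarrow> circ \<Rightarrow> circ" is "\<lambda>a b. frac (a + b)" by (simp add: frac_lt_1)
lift_definition uminus_circ :: "circ \<Rightarrow> circ" is "\<lambda>a. frac (- a)" by (simp add: frac_lt_1)
lift_definition minus_circ :: "circ \<Rightarrow> circ \<Rightarrow> circ" is "\<lambda>a b. frac (a - b)" by (simp add: frac_lt_1)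
instance
proof
  fix a b c :: circ
  show "a + b + c = a + (b + c)" by transfer (simp add: add.assoc)
  show "a + b = b + a" by transfer (simp add: add.commute)
  show "0 + a = a" by transfer (simp add: frac_eq)
  show "- a + a = 0" by transfer (metis add.commute frac_add_simps(2) frac_of_int of_int_0 right_minus)
  show "a - b = a + - b" by transfer (simp add: frac_add_simps(2))
qed
end

lift_definition chalf :: "circ \<Rightarrow> circ" is "\<lambda>a. a / 2" by simp
lift_definition chf :: circ is "1 / 2" by simp

lemma chalf_twice: "chalf c + chalf c = c"
  by transfer (simp add: frac_eq)

lemma chf_twice: "chf + chf = 0"
  by transfer simp

lemma chf_nz: "chf \<noteq> 0"
  by transfer simp

lemma rep_circ_0[simp]: "rep_circ 0 = 0" by transfer simp
lemma rep_circ_eq0: "rep_circ c = 0 \<longleftrightarrow> c = 0"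
  by (metis rep_circ_0 rep_circ_inject)
lemma rep_circ_chf: "rep_circ chf = 1/2" by transfer simp
lemma rep_circ_plus: "rep_circ (a + b) = frac (rep_circ a + rep_circ b)" by transfer simp
lemma rep_circ_neg: "rep_circ (- a) = frac (- rep_circ a)" by transfer simp
lemma rep_circ_chalf: "rep_circ (chalf a) = rep_circ a / 2" by transfer simp
lemma rep_circ_range: "0 \<le> rep_circ a \<and> rep_circ a < 1" using rep_circ by auto

lemma zmul_chf: "zmul n chf = 0 \<longleftrightarrow> even n"
proof
  assume "even n" then obtain q where "n = 2 * q" by blast
  then show "zmul n chf = 0" using zmul_even[OF chf_twice] by simp
next
  assume z: "zmul n chf = 0"
  show "even n"
  proof (rule ccontr)
    assume "odd n" then obtain q where "n = 2 * q + 1" by (metis oddE)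
    then have "zmul n chf = chf" using zmul_odd[OF chf_twice] by simp
    then show False using z chf_nz by simp
  qed
qed

lemma dyadic_int: "dyadic (of_int m)"
  unfolding dyadic_def by (rule exI[of _ m], rule exI[of _ 0]) simp

lemma dyadic_0: "dyadic 0" using dyadic_int[of 0] by simp

lemma dyadic_add: "dyadic x \<Longrightarrow> dyadic y \<Longrightarrow> dyadic (x + y)"
proof -
  assume "dyadic x" "dyadic y"
  then obtain m k m' k' where x: "x = of_int m / 2 ^ k" and y: "y = of_int m' / 2 ^ k'"
    unfolding dyadic_def by blast
  have "x + y = of_int (m * 2 ^ k' + m' * 2 ^ k) / 2 ^ (k + k')"
    unfolding x y by (simp add: field_simps power_add)
  then show ?thesis unfolding dyadic_def by blast
qed

lemma dyadic_neg: "dyadic x \<Longrightarrow> dyadic (- x)"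
  unfolding dyadic_def by (metis minus_divide_left of_int_minus)

lemma dyadic_half: "dyadic x \<Longrightarrow> dyadic (x / 2)"
proof -
  assume "dyadic x"
  then obtain m k where x: "x = of_int m / 2 ^ k" unfolding dyadic_def by blast
  have "x / 2 = of_int m / 2 ^ Suc k" unfolding x by simp
  then show ?thesis unfolding dyadic_def by blast
qed

lemma dyadic_frac: "dyadic x \<Longrightarrow> dyadic (frac x)"
  unfolding frac_def using dyadic_add dyadic_neg dyadic_int by (metis diff_conv_add_uminus)

lemma dyadic_half1: "dyadic (1/2)"
  unfolding dyadic_def by (rule exI[of _ 1], rule exI[of _ 1]) simp

lemma dyadic_1: "dyadic 1"
  using dyadic_int[of 1] by simp

definition Vset :: "enat \<Rightarrow> enat \<Rightarrow> ((nat \<Rightarrow> rat) \<times> (nat \<Rightarrow> circ)) set" where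
  "Vset m k = {(a, b). finite {i. a i \<noteq> 0} \<and> finite {i. b i \<noteq> 0} \<and>
       (\<forall>i. a i \<noteq> 0 \<longrightarrow> enat i < m) \<and> (\<forall>i. b i \<noteq> 0 \<longrightarrow> enat i < k) \<and>
       (\<forall>i. dyadic (a i)) \<and> (\<forall>i. dyadic (rep_circ (b i)))}"

definition vhalf :: "(nat \<Rightarrow> rat) \<times> (nat \<Rightarrow> circ) \<Rightarrow> (nat \<Rightarrow> rat) \<times> (nat \<Rightarrow> circ)" where
  "vhalf p = ((\<lambda>i. fst p i / 2), (\<lambda>i. chalf (snd p i)))"

lemma vhalf_twice: "vhalf p + vhalf p = p"
  unfolding vhalf_def prod_eq_iff fun_eq_iff by (simp add: chalf_twice)

lemma chalf_eq0: "chalf c = 0 \<longleftrightarrow> c = 0"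
  by (metis rep_circ_chalf rep_circ_eq0 divide_eq_0_iff zero_neq_numeral)

lemma vhalf_V: "p \<in> Vset m k \<Longrightarrow> vhalf p \<in> Vset m k"
  unfolding Vset_def vhalf_def by (auto simp: chalf_eq0 rep_circ_chalf dyadic_half)

lemma Vset_subgrp: "subgrp (Vset m k)"
  unfolding subgrp_def
proof (intro conjI ballI)
  show "0 \<in> Vset m k" unfolding Vset_def by (simp add: zero_prod_def dyadic_0)
next
  fix p q assume p: "p \<in> Vset m k" and q: "q \<in> Vset m k"
  obtain a b where pab: "p = (a, b)" by fastforce
  obtain a' b' where qab: "q = (a', b')" by fastforce
  have 1: "{i. a i + a' i \<noteq> 0} \<subseteq> {i. a i \<noteq> 0} \<union> {i. a' i \<noteq> 0}" by auto
  have 2: "{i. b i + b' i \<noteq> 0} \<subseteq> {i. b i \<noteq> 0} \<union> {i. b' i \<noteq> 0}" by auto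
  show "p + q \<in> Vset m k"
    using p q 1 2 unfolding pab qab Vset_def
    by (auto simp: plus_prod_def rep_circ_plus intro!: dyadic_add dyadic_frac
        elim: finite_subset; metis add.right_neutral)
next
  fix p assume p: "p \<in> Vset m k"
  obtain a b where pab: "p = (a, b)" by fastforce
  have 2: "{i. - b i \<noteq> 0} = {i. b i \<noteq> 0}" by auto
  show "- p \<in> Vset m k"
    using p 2 unfolding pab Vset_def
    by (auto simp: rep_circ_neg intro!: dyadic_neg dyadic_frac)
qed



lemma inj_ess:
  fixes F :: "'a::ab_group_add \<Rightarrow> 'b::ab_group_add"
  assumes hom: "\<And>x y. F (x + y) = F x + F y" and mx: "maximal_indep (\<lambda>_. True) L"
    and FL: "\<And>l. l \<in> L \<Longrightarrow> F l = val l"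
    and VI: "\<And>Fs c. finite Fs \<Longrightarrow> Fs \<subseteq> L \<Longrightarrow> (\<Sum>l\<in>Fs. zmul (c l) (val l)) = 0 \<Longrightarrow> \<forall>l\<in>Fs. zmul (c l) l = 0"
  shows "inj F"
proof -
  have ind: "independent_set L" using mx by (simp add: maximal_indep_def)
  have F0: "F 0 = 0" using hom[of 0 0] by simp
  have Fneg: "F (- x) = - F x" for x using hom[of x "-x"] F0 by (simp add: eq_neg_iff_add_eq_0 add.commute)
  have Fdiff: "F (x - y) = F x - F y" for x y using hom[of x "-y"] Fneg[of y] by simp
  have ker: "z = 0" if Fz: "F z = 0" for z
  proof (rule ccontr)
    assume z0: "z \<noteq> 0"
    show False
    proof (cases "z \<in> L")
      case True
      have "(\<Sum>l\<in>{z}. zmul 1 (val l)) = 0" using FL[OF True] Fz by simp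
      then have "zmul 1 z = 0" using VI[of "{z}" "\<lambda>_. 1"] True by auto
      then show False using z0 by simp
    next
      case False
      have "\<not> independent_set (insert z L)"
      proof
        assume "independent_set (insert z L)"
        then have "insert z L = L" using mx unfolding maximal_indep_def by blast
        then show False using False by blast
      qed
      then obtain c where c: "zmul c z \<noteq> 0" "zmul c z \<in> gen_subgroup L"
        using dep_lemma[OF ind False z0] by blast
      obtain Fs n where Fs: "finite Fs" "Fs \<subseteq> L" "zmul c z = (\<Sum>x\<in>Fs. zmul (n x) x)"
        using c(2) by (rule gs_memE)
      have "F (zmul c z) = zmul c (F z)" by (rule hom_zmul[OF hom])
      then have "F (zmul c z) = 0" using Fz by simp
      moreover have "F (zmul c z) = (\<Sum>x\<in>Fs. zmul (n x) (val x))"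
      proof -
        have "F (zmul c z) = (\<Sum>x\<in>Fs. F (zmul (n x) x))" unfolding Fs(3) by (rule hom_sum[OF hom])
        also have "\<dots> = (\<Sum>x\<in>Fs. zmul (n x) (val x))"
          using Fs(2) by (intro sum.cong) (auto simp: hom_zmul[OF hom] FL)
        finally show ?thesis .
      qed
      ultimately have "\<forall>x\<in>Fs. zmul (n x) x = 0" using VI[OF Fs(1,2)] by simp
      then have "zmul c z = 0" using Fs(3) by simp
      then show False using c by simp
    qed
  qed
  show ?thesis
  proof (rule injI)
    fix x y assume "F x = F y"
    then have "F (x - y) = 0" using Fdiff by simp
    then show "x = y" using ker by fastforce
  qed
qed

lemma inf_order_zero: assumes "infinite_order x" "zmul n x = 0" shows "n = 0"
proof (rule ccontr)
  assume n0: "n \<noteq> 0"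
  show False
  proof (cases "n > 0")
    case True
    then have "nat n > 0" by simp
    then have "zmul (int (nat n)) x \<noteq> 0" using assms(1) unfolding infinite_order_def by blast
    then show False using assms(2) True by simp
  next
    case False
    then have "nat (- n) > 0" using n0 by simp
    then have "zmul (int (nat (- n))) x \<noteq> 0" using assms(1) unfolding infinite_order_def by blast
    then have "zmul (- n) x \<noteq> 0" using False by simp
    then show False using assms(2) by (simp add: zmul_neg)
  qed
qed



lemma core:
  fixes g h :: "nat \<Rightarrow> 'a::ab_group_add" and m k :: enat
  assumes ig: "inj_on g {i. enat i < m}" and ih: "inj_on h {i. enat i < k}"
    and mx: "maximal_indep (\<lambda>_. True) (g ` {i. enat i < m} \<union> h ` {i. enat i < k})"
    and ginf: "\<forall>i. enat i < m \<longrightarrow> infinite_order (g i)"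
    and hsoc: "\<forall>i. enat i < k \<longrightarrow> h i \<in> socle"
    and q2: "quotient_2primary (gen_subgroup (g ` {i. enat i < m}))"
  shows "\<exists>f::'a \<Rightarrow> (nat \<Rightarrow> rat) \<times> (nat \<Rightarrow> rat).
            monomorphism_into m k f \<and>
            (\<forall>i. enat i < m \<longrightarrow> f (g i) = ((\<lambda>j. if j = i then 1 else 0), (\<lambda>_. 0))) \<and>
            (\<forall>i. enat i < k \<longrightarrow> f (h i) = ((\<lambda>_. 0), (\<lambda>j. if j = i then 1/2 else 0)))"
proof -
  define I where "I = {i. enat i < m}"
  define J where "J = {i. enat i < k}"
  define L where "L = g ` I \<union> h ` J"
  have ind: "independent_set L" using mx unfolding L_def I_def J_def maximal_indep_def by blast
  have zL: "0 \<notin> L" using ind by (simp add: independent_set_def)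
  have gz: "\<And>i n. i \<in> I \<Longrightarrow> zmul n (g i) = 0 \<Longrightarrow> n = 0"
    using ginf inf_order_zero unfolding I_def by blast
  have hh: "\<And>j. j \<in> J \<Longrightarrow> h j + h j = 0" using hsoc unfolding J_def socle_def by blast
  have hnotg: "\<And>j. j \<in> J \<Longrightarrow> h j \<notin> g ` I"
  proof
    fix j assume j: "j \<in> J" and "h j \<in> g ` I"
    then obtain i where i: "i \<in> I" "h j = g i" by blast
    then have "zmul 2 (g i) = 0" using hh[OF j] by (simp add: zmul_2)
    then show False using gz[OF i(1)] by fastforce
  qed
  define val :: "'a \<Rightarrow> (nat \<Rightarrow> rat) \<times> (nat \<Rightarrow> circ)" where "val l = (if l \<in> g ` I then ((\<lambda>j. if j = inv_into I g l then 1 else 0), 0)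
      else (0, (\<lambda>j. if j = inv_into J h l then chf else 0)))" for l
  have val_g: "\<And>i. i \<in> I \<Longrightarrow> val (g i) = ((\<lambda>j. if j = i then 1 else 0), 0)"
    unfolding val_def using ig unfolding I_def by (simp add: inv_into_f_f)
  have val_h: "\<And>j. j \<in> J \<Longrightarrow> val (h j) = (0, (\<lambda>i. if i = j then chf else 0))"
    unfolding val_def using ih hnotg unfolding J_def by (simp add: inv_into_f_f)
  have tp: "\<And>x. \<exists>e::nat. zmul (2 ^ e) x \<in> gen_subgroup L"
  proof -
    fix x
    obtain e where "zmul (2 ^ e) x \<in> gen_subgroup (g ` I)" using q2 unfolding quotient_2primary_def I_def by blast
    moreover have "gen_subgroup (g ` I) \<subseteq> gen_subgroup L" unfolding L_def by (rule gs_mono) blast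
    ultimately show "\<exists>e::nat. zmul (2 ^ e) x \<in> gen_subgroup L" by blast
  qed
  have valV: "val l \<in> Vset m k" if lL: "l \<in> L" for l
  proof (cases "l \<in> g ` I")
    case True
    then obtain i where i: "i \<in> I" "l = g i" by blast
    have "{j. (if j = i then 1 else 0::rat) \<noteq> 0} = {i}" by auto
    then show ?thesis using i val_g unfolding Vset_def I_def
      by (auto simp: dyadic_0 dyadic_1)
  next
    case False
    then obtain j where j: "j \<in> J" "l = h j" using lL unfolding L_def by blast
    have "{i. (if i = j then chf else 0) \<noteq> 0} = {j}" using chf_nz by auto
    then show ?thesis using j val_h unfolding Vset_def J_def
      by (auto simp: dyadic_0 rep_circ_chf dyadic_half1)
  qed
  have valtor: "zmul n (val l) = 0" if lL: "l \<in> L" and nl: "zmul n l = 0" for l n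
  proof (cases "l \<in> g ` I")
    case True
    then obtain i where i: "i \<in> I" "l = g i" by blast
    then have "n = 0" using gz nl by blast
    then show ?thesis by simp
  next
    case False
    then obtain j where j: "j \<in> J" "l = h j" using lL unfolding L_def by blast
    have "even n"
    proof (rule ccontr)
      assume "odd n" then obtain q where "n = 2 * q + 1" by (metis oddE)
      then have "zmul n l = l" using zmul_odd[OF hh[OF j(1)]] j by simp
      then show False using nl lL zL by simp
    qed
    then obtain q where q: "n = 2 * q" by blast
    have "val l + val l = 0" using j val_h by (simp add: prod_eq_iff fun_eq_iff chf_twice)
    then show ?thesis using q zmul_even by metis
  qed
  obtain F where Fh: "\<And>x y. F (x + y) = F x + F y" and FV: "\<And>x. F x \<in> Vset m k"
    and FL: "\<And>l. l \<in> L \<Longrightarrow> F l = val l"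
    using ext_exists[where L=L and val=val and V="Vset m k" and half=vhalf, OF ind tp valV valtor Vset_subgrp vhalf_V vhalf_twice] by blast
  have VI: "\<forall>l\<in>Fs. zmul (c l) l = 0"
    if Fs: "finite Fs" "Fs \<subseteq> L" and s0: "(\<Sum>l\<in>Fs. zmul (c l) (val l)) = 0" for Fs c
  proof
    fix l0 assume l0: "l0 \<in> Fs"
    show "zmul (c l0) l0 = 0"
    proof (cases "l0 \<in> g ` I")
      case True
      then obtain i0 where i0: "i0 \<in> I" "l0 = g i0" by blast
      have phi: "fst (val l) i0 = (if l = l0 then 1 else 0)" if lL: "l \<in> L" for l
      proof (cases "l \<in> g ` I")
        case True
        then obtain i where i: "i \<in> I" "l = g i" by blast
        have "(i0 = i) = (g i0 = g i)" using ig i i0 unfolding I_def inj_on_def by blast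
        then show ?thesis using i i0 val_g by auto
      next
        case False
        then obtain j where j: "j \<in> J" "l = h j" using lL unfolding L_def by blast
        then show ?thesis using val_h False i0 by auto
      qed
      have "0 = fst (\<Sum>l\<in>Fs. zmul (c l) (val l)) i0" using s0 by simp
      also have "\<dots> = (\<Sum>l\<in>Fs. fst (zmul (c l) (val l)) i0)"
        by (rule hom_sum) simp
      also have "\<dots> = (\<Sum>l\<in>Fs. if l = l0 then of_int (c l) else 0)"
        using Fs(2) by (intro sum.cong) (auto simp: zmul_fst zmul_fun_apply zmul_rat phi)
      also have "\<dots> = of_int (c l0)" using l0 Fs(1) by simp
      finally have "c l0 = 0" by simp
      then show ?thesis by simp
    next
      case False
      then obtain j0 where j0: "j0 \<in> J" "l0 = h j0" using l0 Fs(2) unfolding L_def by blast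
      have psi: "snd (val l) j0 = (if l = l0 then chf else 0)" if lL: "l \<in> L" for l
      proof (cases "l \<in> g ` I")
        case True
        then obtain i where i: "i \<in> I" "l = g i" by blast
        then show ?thesis using val_g False by auto
      next
        case False
        then obtain j where j: "j \<in> J" "l = h j" using lL unfolding L_def by blast
        have "(j0 = j) = (h j0 = h j)" using ih j j0 unfolding J_def inj_on_def by blast
        then show ?thesis using j j0 val_h by auto
      qed
      have "0 = snd (\<Sum>l\<in>Fs. zmul (c l) (val l)) j0" using s0 by simp
      also have "\<dots> = (\<Sum>l\<in>Fs. snd (zmul (c l) (val l)) j0)"
        by (rule hom_sum) simp
      also have "\<dots> = (\<Sum>l\<in>Fs. if l = l0 then zmul (c l) chf else 0)"
        using Fs(2) by (intro sum.cong) (auto simp: zmul_snd zmul_fun_apply psi)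
      also have "\<dots> = zmul (c l0) chf" using l0 Fs(1) by simp
      finally have "even (c l0)" using zmul_chf by metis
      then obtain q where "c l0 = 2 * q" by blast
      then show ?thesis using zmul_even[OF hh[OF j0(1)]] j0 by simp
    qed
  qed
  have mxL: "maximal_indep (\<lambda>_. True) L" using mx unfolding L_def I_def J_def .
  have injF: "inj F" by (rule inj_ess[OF Fh mxL FL VI]) auto
  define f where "f x = (fst (F x), (\<lambda>i. rep_circ (snd (F x) i)))" for x
  have "monomorphism_into m k f"
    unfolding monomorphism_into_def
  proof (intro conjI allI)
    show "inj f"
    proof (rule injI)
      fix x y assume "f x = f y"
      then have "fst (F x) = fst (F y)" "\<And>i. rep_circ (snd (F x) i) = rep_circ (snd (F y) i)"
        unfolding f_def by (auto simp: fun_eq_iff)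
      then have "F x = F y" by (simp add: prod_eq_iff fun_eq_iff rep_circ_inject)
      then show "x = y" using injF by (simp add: inj_eq)
    qed
  next
    fix x
    have "F x \<in> Vset m k" by (rule FV)
    moreover have "{i. rep_circ (snd (F x) i) \<noteq> 0} = {i. snd (F x) i \<noteq> 0}" by (simp add: rep_circ_eq0)
    ultimately show "f x \<in> target m k"
      unfolding Vset_def target_def f_def using rep_circ_range by (auto simp: rep_circ_eq0)
  next
    fix x y
    show "f (x + y) = target_add (f x) (f y)"
      unfolding f_def target_add_def by (simp add: Fh rep_circ_plus fun_eq_iff)
  qed
  moreover have "\<forall>i. enat i < m \<longrightarrow> f (g i) = ((\<lambda>j. if j = i then 1 else 0), (\<lambda>_. 0))"
  proof (intro allI impI)
    fix i assume "enat i < m"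
    then have "i \<in> I" "g i \<in> L" unfolding I_def L_def by auto
    then show "f (g i) = ((\<lambda>j. if j = i then 1 else 0), (\<lambda>_. 0))"
      unfolding f_def using FL val_g by simp
  qed
  moreover have "\<forall>i. enat i < k \<longrightarrow> f (h i) = ((\<lambda>_. 0), (\<lambda>j. if j = i then 1/2 else 0))"
  proof (intro allI impI)
    fix i assume "enat i < k"
    then have "i \<in> J" "h i \<in> L" unfolding J_def L_def by auto
    then show "f (h i) = ((\<lambda>_. 0), (\<lambda>j. if j = i then 1/2 else 0))"
      unfolding f_def using FL val_h by (simp add: fun_eq_iff rep_circ_chf)
  qed
  ultimately show ?thesis by blast
qed



lemma indep_rel: "independent_set S \<Longrightarrow> finite F \<Longrightarrow> F \<subseteq> S \<Longrightarrow> (\<Sum>x\<in>F. zmul (n x) x) = 0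
  \<Longrightarrow> \<forall>x\<in>F. zmul (n x) x = 0"
  unfolding independent_set_def by blast

lemma indep_subset: "independent_set S \<Longrightarrow> T \<subseteq> S \<Longrightarrow> independent_set T"
  unfolding independent_set_def by (meson order_trans subsetD)

lemma max_not_indep:
  "maximal_indep P S \<Longrightarrow> P x \<Longrightarrow> x \<notin> S \<Longrightarrow> \<not> independent_set (insert x S)"
  unfolding maximal_indep_def by blast

lemma exists_max_order_two: "\<exists>S0::'a::ab_group_add set. maximal_indep order_two S0"
proof -
  define \<A> where "\<A> = {S::'a set. independent_set S \<and> (\<forall>x\<in>S. order_two x)}"
  have "\<exists>M\<in>\<A>. \<forall>X\<in>\<A>. M \<subseteq> X \<longrightarrow> X = M"
  proof (rule subset_Zorn')
    fix C assume ch: "subset.chain \<A> C"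
    have CA: "C \<subseteq> \<A>" using ch by (auto simp: subset_chain_def)
    show "\<Union>C \<in> \<A>"
    proof (cases "C = {}")
      case True then show ?thesis unfolding \<A>_def independent_set_def by simp
    next
      case False
      have "independent_set (\<Union>C)"
        unfolding independent_set_def
      proof (intro conjI allI impI)
        show "0 \<notin> \<Union>C" using CA unfolding \<A>_def independent_set_def by blast
      next
        fix F n assume F: "finite F \<and> F \<subseteq> \<Union>C \<and> (\<Sum>x\<in>F. zmul (n x) x) = 0"
        then obtain B where "B \<in> C" "F \<subseteq> B" using finite_subset_Union_chain[OF _ _ False ch] by blast
        then show "\<forall>x\<in>F. zmul (n x) x = 0" using CA F unfolding \<A>_def independent_set_def by blast
      qed
      then show ?thesis using CA unfolding \<A>_def by blast
    qed
  qed
  then obtain M where "M \<in> \<A>" "\<And>X. X \<in> \<A> \<Longrightarrow> M \<subseteq> X \<Longrightarrow> X = M" by blast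
  then have "maximal_indep order_two M" unfolding maximal_indep_def \<A>_def by blast
  then show ?thesis by blast
qed

lemma enum_ecard:
  assumes "countable X"
  shows "\<exists>g. bij_betw g {i. enat i < ecard X} X"
proof (cases "finite X")
  case True
  have "{i. enat i < ecard X} = {..< card X}" using True by (auto simp: ecard_def)
  then show ?thesis using bij_betw_from_nat_into_finite[OF True] by metis
next
  case False
  have "{i. enat i < ecard X} = UNIV" using False by (auto simp: ecard_def)
  then show ?thesis using bij_betw_from_nat_into[OF assms False] by metis
qed

lemma target_mono: "m \<le> m' \<Longrightarrow> k \<le> k' \<Longrightarrow> target m k \<subseteq> target m' k'"
  unfolding target_def by (auto intro: order_less_le_trans)

lemma gs_torsion_free:
  assumes ind: "independent_set S" and inf: "\<forall>s\<in>S. infinite_order s"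
    and z: "z \<in> gen_subgroup S" and nz: "zmul n z = 0" and n: "n \<noteq> 0"
  shows "z = 0"
proof -
  obtain F a where F: "finite F" "F \<subseteq> S" "z = (\<Sum>x\<in>F. zmul (a x) x)" using z by (rule gs_memE)
  have "zmul n z = (\<Sum>x\<in>F. zmul n (zmul (a x) x))" unfolding F(3)
    by (rule hom_sum) (simp add: zmul_right_add)
  also have "\<dots> = (\<Sum>x\<in>F. zmul (n * a x) x)" by (simp add: zmul_mult)
  finally have "(\<Sum>x\<in>F. zmul (n * a x) x) = 0" using nz by simp
  then have "\<forall>x\<in>F. zmul (n * a x) x = 0" using indep_rel[OF ind F(1,2), of "\<lambda>x. n * a x"] by blast
  then have "\<forall>x\<in>F. n * a x = 0" using inf F(2) inf_order_zero by (meson subsetD)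
  then have "\<forall>x\<in>F. a x = 0" using n by simp
  then show ?thesis using F(3) by simp
qed

lemma union_indep:
  assumes S: "maximal_indep infinite_order S" and S0: "maximal_indep order_two S0"
  shows "independent_set (S \<union> S0)"
proof -
  have iS: "independent_set S" and iS0: "independent_set S0"
    and inf: "\<forall>s\<in>S. infinite_order s" and o2: "\<forall>s\<in>S0. order_two s"
    using S S0 unfolding maximal_indep_def by auto
  show ?thesis
    unfolding independent_set_def
  proof (intro conjI allI impI)
    show "0 \<notin> S \<union> S0" using iS iS0 unfolding independent_set_def by blast
  next
    fix F n assume F: "finite F \<and> F \<subseteq> S \<union> S0 \<and> (\<Sum>x\<in>F. zmul (n x) x) = 0"
    have split: "(\<Sum>x\<in>F. zmul (n x) x) = (\<Sum>x\<in>F \<inter> S. zmul (n x) x) + (\<Sum>x\<in>F - S. zmul (n x) x)"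
      using F sum.Int_Diff by blast
    have FS0: "F - S \<subseteq> S0" using F by blast
    have "zmul 2 (\<Sum>x\<in>F. zmul (n x) x) = (\<Sum>x\<in>F. zmul 2 (zmul (n x) x))"
      by (rule hom_sum) (simp add: zmul_right_add)
    then have "0 = (\<Sum>x\<in>F. zmul 2 (zmul (n x) x))" using F by simp
    also have "\<dots> = (\<Sum>x\<in>F \<inter> S. zmul 2 (zmul (n x) x)) + (\<Sum>x\<in>F - S. zmul 2 (zmul (n x) x))"
      using F sum.Int_Diff by blast
    finally have "0 = (\<Sum>x\<in>F \<inter> S. zmul 2 (zmul (n x) x)) + (\<Sum>x\<in>F - S. zmul 2 (zmul (n x) x))" .
    moreover have "(\<Sum>x\<in>F - S. zmul 2 (zmul (n x) x)) = 0"
    proof (rule sum.neutral, rule ballI)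
      fix x assume "x \<in> F - S"
      then have "x + x = 0" using FS0 o2 unfolding order_two_def by blast
      then show "zmul 2 (zmul (n x) x) = 0" by (metis zmul_2 mult.commute zmul_mult zmul_zero_right)
    qed
    ultimately have "(\<Sum>x\<in>F \<inter> S. zmul (2 * n x) x) = 0" by (simp add: zmul_mult)
    then have "\<forall>x\<in>F \<inter> S. zmul (2 * n x) x = 0" using indep_rel[OF iS, of "F \<inter> S" "\<lambda>x. 2 * n x"] F by blast
    then have z1: "\<forall>x\<in>F \<inter> S. n x = 0" using inf inf_order_zero by fastforce
    then have "(\<Sum>x\<in>F \<inter> S. zmul (n x) x) = 0" by simp
    then have "(\<Sum>x\<in>F - S. zmul (n x) x) = 0" using split F by simp
    then have "\<forall>x\<in>F - S. zmul (n x) x = 0" using indep_rel[OF iS0, of "F - S" n] F FS0 by blast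
    then show "\<forall>x\<in>F. zmul (n x) x = 0" using z1 by auto
  qed
qed

lemma union_max:
  assumes S: "maximal_indep infinite_order S" and S0: "maximal_indep order_two S0"
    and q2: "quotient_2primary (gen_subgroup S)"
  shows "maximal_indep (\<lambda>_. True) (S \<union> S0)"
proof -
  have iS: "independent_set S" and iS0: "independent_set S0"
    and inf: "\<forall>s\<in>S. infinite_order s" and o2: "\<forall>s\<in>S0. order_two s"
    using S S0 unfolding maximal_indep_def by auto
  have ess: "\<exists>c. zmul c x \<noteq> 0 \<and> zmul c x \<in> gen_subgroup (S \<union> S0)" if x0: "x \<noteq> 0" for x
  proof (cases "x \<in> S \<union> S0")
    case True then show ?thesis using x0 by (intro exI[of _ 1]) (simp add: gs_base)
  next
    case xn: False
    have gm: "gen_subgroup S \<subseteq> gen_subgroup (S \<union> S0)" "gen_subgroup S0 \<subseteq> gen_subgroup (S \<union> S0)"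
      by (simp_all add: gs_mono)
    show ?thesis
    proof (cases "infinite_order x")
      case True
      have "\<not> independent_set (insert x S)" using max_not_indep[OF S True] xn by blast
      then show ?thesis using dep_lemma[OF iS _ x0] xn gm by blast
    next
      case False
      then obtain n0 :: nat where n0: "n0 > 0" "zmul (int n0) x = 0" unfolding infinite_order_def by blast
      obtain e0 :: nat where e0: "zmul (2 ^ e0) x \<in> gen_subgroup S" using q2 unfolding quotient_2primary_def by blast
      have "zmul (int n0) (zmul (2 ^ e0) x) = 0" using n0 by (metis mult.commute zmul_mult zmul_zero_right)
      then have ex: "zmul (2 ^ e0) x = 0" using gs_torsion_free[OF iS inf e0] n0 by simp
      define e where "e = (LEAST e::nat. zmul (2 ^ e) x = 0)"
      have e1: "zmul (2 ^ e) x = 0" unfolding e_def using ex by (rule LeastI)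
      have e2: "\<And>j. zmul (2 ^ j) x = 0 \<Longrightarrow> e \<le> j" unfolding e_def by (rule Least_le)
      have "e \<noteq> 0" using e1 x0 by (metis power_0 zmul_1)
      then obtain e' where e': "e = Suc e'" using not0_implies_Suc by blast
      define y where "y = zmul (2 ^ e') x"
      have y0: "y \<noteq> 0" using e2[of e'] e' unfolding y_def by fastforce
      have "y + y = zmul (2 ^ e) x" unfolding y_def e' by (simp add: zmul_2[symmetric] zmul_mult[symmetric] mult.commute)
      then have yo: "order_two y" using e1 y0 unfolding order_two_def by simp
      have "\<exists>d. zmul d y \<noteq> 0 \<and> zmul d y \<in> gen_subgroup (S \<union> S0)"
      proof (cases "y \<in> S0")
        case True then show ?thesis using y0 gm by (intro exI[of _ 1]) (auto simp: gs_base)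
      next
        case False
        have "\<not> independent_set (insert y S0)" using max_not_indep[OF S0 yo False] .
        then show ?thesis using dep_lemma[OF iS0 False y0] gm by blast
      qed
      then obtain d where "zmul d y \<noteq> 0" "zmul d y \<in> gen_subgroup (S \<union> S0)" by blast
      then show ?thesis unfolding y_def by (metis zmul_mult)
    qed
  qed
  show ?thesis
    unfolding maximal_indep_def
  proof (intro conjI allI impI ballI)
    show "independent_set (S \<union> S0)" by (rule union_indep[OF S S0])
  next
    fix S' assume S': "S \<union> S0 \<subseteq> S' \<and> independent_set S' \<and> (\<forall>x\<in>S'. True)"
    show "S' = S \<union> S0"
    proof (rule ccontr)
      assume "S' \<noteq> S \<union> S0"
      then obtain x where x: "x \<in> S'" "x \<notin> S \<union> S0" using S' by blast
      have "x \<noteq> 0" using S' x unfolding independent_set_def by blast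
      then obtain c where c: "zmul c x \<noteq> 0" "zmul c x \<in> gen_subgroup (S \<union> S0)" using ess by blast
      have "zmul c x = 0" using indep_one[of S' "S \<union> S0" x c] S' x c by blast
      then show False using c by simp
    qed
  qed simp
qed



lemma rank_bound:
  fixes f :: "'a::ab_group_add \<Rightarrow> (nat \<Rightarrow> rat) \<times> (nat \<Rightarrow> rat)" and g :: "nat \<Rightarrow> 'a" and S' :: "'a set"
  assumes hom: "\<And>x y. f (x + y) = target_add (f x) (f y)"
    and fg: "\<And>i. i \<in> I0 \<Longrightarrow> fst (f (g i)) = (\<lambda>j. if j = i then 1 else 0)"
    and ginf: "\<And>i. i \<in> I0 \<Longrightarrow> infinite_order (g i)"
    and S': "maximal_indep infinite_order S'" and fin: "finite S'" and fI0: "finite I0"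
  shows "card I0 \<le> card S'"
proof -
  define A where "A x = fst (f x)" for x
  have Ah: "A (x + y) = A x + A y" for x y unfolding A_def using hom[of x y]
    by (simp add: target_add_def fun_eq_iff)
  interpret vs: vector_space "\<lambda>(c::rat) (v::nat \<Rightarrow> rat). (\<lambda>i. c * v i)"
    by unfold_locales (auto simp: fun_eq_iff algebra_simps)
  have zsc: "zmul n (v::nat \<Rightarrow> rat) = (\<lambda>i. of_int n * v i)" for n v
    by (simp add: fun_eq_iff zmul_fun_apply zmul_rat)
  have iS': "independent_set S'" using S' by (simp add: maximal_indep_def)
  define e :: "nat \<Rightarrow> nat \<Rightarrow> rat" where "e i = (\<lambda>j. if j = i then (1::rat) else 0)" for i
  have einj: "e i = e i' \<Longrightarrow> i = i'" for i i' unfolding e_def by (metis one_neq_zero)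
  define E where "E = e ` I0"
  have cardE: "card E = card I0" unfolding E_def by (rule card_image) (meson einj inj_onI)
  have Esp: "E \<subseteq> vs.span (A ` S')"
  proof
    fix v assume "v \<in> E"
    then obtain i where i: "i \<in> I0" "v = e i" unfolding E_def by blast
    have Agi: "A (g i) = e i" unfolding A_def e_def using fg[OF i(1)] .
    show "v \<in> vs.span (A ` S')"
    proof (cases "g i \<in> S'")
      case True then show ?thesis using i Agi vs.span_base[of "A (g i)" "A ` S'"] by (metis image_eqI)
    next
      case False
      have x0: "g i \<noteq> 0" using ginf[OF i(1)] unfolding infinite_order_def
        by (metis zero_less_one of_nat_1 zmul_1)
      have "\<not> independent_set (insert (g i) S')" using max_not_indep[OF S' ginf[OF i(1)] False] .
      then obtain c where c: "zmul c (g i) \<noteq> 0" "zmul c (g i) \<in> gen_subgroup S'"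
        using dep_lemma[OF iS' False x0] by blast
      have c0: "c \<noteq> 0" using c by auto
      obtain Fs n where Fs: "finite Fs" "Fs \<subseteq> S'" "zmul c (g i) = (\<Sum>y\<in>Fs. zmul (n y) y)"
        using c(2) by (rule gs_memE)
      have "A (zmul c (g i)) = (\<Sum>y\<in>Fs. A (zmul (n y) y))" unfolding Fs(3) by (rule hom_sum[OF Ah])
      also have "\<dots> = (\<Sum>y\<in>Fs. (\<lambda>j. of_int (n y) * A y j))" by (simp add: hom_zmul[OF Ah] zsc)
      finally have eq: "(\<lambda>j. of_int c * e i j) = (\<Sum>y\<in>Fs. (\<lambda>j. of_int (n y) * A y j))"
        by (simp add: hom_zmul[OF Ah] zsc Agi)
      have "(\<Sum>y\<in>Fs. (\<lambda>j. of_int (n y) * A y j)) \<in> vs.span (A ` S')"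
        using Fs(2) by (intro vs.span_sum vs.span_scale vs.span_base) auto
      then have "(\<lambda>j. inverse (of_int c) * (\<Sum>y\<in>Fs. (\<lambda>j. of_int (n y) * A y j)) j) \<in> vs.span (A ` S')"
        by (rule vs.span_scale)
      moreover have "(\<lambda>j. inverse (of_int c) * (\<Sum>y\<in>Fs. (\<lambda>j. of_int (n y) * A y j)) j) = e i"
        unfolding eq[symmetric] using c0 by (simp add: fun_eq_iff)
      ultimately show ?thesis using i by simp
    qed
  qed
  have Eind: "vs.independent E"
  proof
    assume "vs.dependent E"
    then obtain t u where t: "finite t" "t \<subseteq> E" "(\<Sum>v\<in>t. (\<lambda>i. u v * v i)) = 0" and v: "\<exists>v\<in>t. u v \<noteq> 0"
      unfolding vs.dependent_explicit by blast
    then obtain v where vt: "v \<in> t" "u v \<noteq> 0" by blast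
    then obtain i where i: "v = e i" using t(2) unfolding E_def by blast
    have ev: "w i = (if w = v then 1 else 0)" if wt: "w \<in> t" for w
    proof -
      obtain i' where wi: "w = e i'" using wt t(2) unfolding E_def by blast
      have "(w = v) = (i' = i)" using einj i wi by blast
      moreover have "w i = (if i' = i then 1 else 0)" unfolding wi e_def by simp
      ultimately show ?thesis by simp
    qed
    have "0 = (\<Sum>v\<in>t. (\<lambda>i. u v * v i)) i" using t(3) by simp
    also have "\<dots> = (\<Sum>w\<in>t. u w * w i)" using hom_sum[where \<phi>="\<lambda>v. v i" and f="\<lambda>v. (\<lambda>i. u v * v i)" and A=t] by simp
    also have "\<dots> = (\<Sum>w\<in>t. if w = v then u w else 0)" by (rule sum.cong) (auto simp: ev)
    also have "\<dots> = u v" using vt t(1) by simp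
    finally show False using vt by simp
  qed
  have "finite E \<and> card E \<le> card (A ` S')"
    by (rule vs.independent_span_bound[OF _ Eind Esp]) (use fin in simp)
  then have "card E \<le> card S'" using card_image_le[OF fin, of A] by linarith
  then show ?thesis using cardE by simp
qed



theorem mainTheorem7:
  fixes g h :: "nat \<Rightarrow> 'a::ab_group_add"
  assumes "countable (UNIV :: 'a set)"
    and "even_by_quotient TYPE('a)"
  shows "(\<exists>f::'a \<Rightarrow> (nat \<Rightarrow> rat) \<times> (nat \<Rightarrow> rat).
            monomorphism_into (r0 TYPE('a)) (r2 TYPE('a)) f)
          \<and> (inj_on g {i. enat i < r0 TYPE('a)} \<and>
          inj_on h {i. enat i < r2 TYPE('a)} \<and>
          maximal_indep (\<lambda>_. True) (g ` {i. enat i < r0 TYPE('a)} \<union> h ` {i. enat i < r2 TYPE('a)}) \<and>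
          (\<forall>i. enat i < r0 TYPE('a) \<longrightarrow> infinite_order (g i)) \<and>
          (\<forall>i. enat i < r2 TYPE('a) \<longrightarrow> h i \<in> socle) \<and>
          quotient_2primary (gen_subgroup (g ` {i. enat i < r0 TYPE('a)})) 
         \<longrightarrow> (\<exists>f::'a \<Rightarrow> (nat \<Rightarrow> rat) \<times> (nat \<Rightarrow> rat).
            monomorphism_into (r0 TYPE('a)) (r2 TYPE('a)) f \<and>
            (\<forall>i. enat i < r0 TYPE('a) \<longrightarrow> f (g i) = ((\<lambda>j. if j = i then 1 else 0), (\<lambda>_. 0))) \<and>
            (\<forall>i. enat i < r2 TYPE('a) \<longrightarrow> f (h i) = ((\<lambda>_. 0), (\<lambda>j. if j = i then 1/2 else 0)))))"
proof (rule conjI)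
  show "\<exists>f::'a \<Rightarrow> (nat \<Rightarrow> rat) \<times> (nat \<Rightarrow> rat). monomorphism_into (r0 TYPE('a)) (r2 TYPE('a)) f"
  proof -
    obtain S :: "'a set" where S: "maximal_indep infinite_order S" and q2: "quotient_2primary (gen_subgroup S)"
      using assms(2) unfolding even_by_quotient_def by blast
    have "\<exists>r. \<exists>S::'a set. maximal_indep order_two S \<and> r = ecard S" using exists_max_order_two by blast
    then have "\<exists>S::'a set. maximal_indep order_two S \<and> r2 TYPE('a) = ecard S"
      unfolding r2_def by (rule someI_ex)
    then obtain S0 :: "'a set" where S0: "maximal_indep order_two S0" and r2e: "r2 TYPE('a) = ecard S0" by blast
    have "\<exists>r. \<exists>S::'a set. maximal_indep infinite_order S \<and> r = ecard S" using S by blast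
    then have "\<exists>S::'a set. maximal_indep infinite_order S \<and> r0 TYPE('a) = ecard S"
      unfolding r0_def by (rule someI_ex)
    then obtain S' :: "'a set" where S': "maximal_indep infinite_order S'" and r0e: "r0 TYPE('a) = ecard S'" by blast
    obtain g0 where g0: "bij_betw g0 {i. enat i < ecard S} S"
      using enum_ecard[OF countable_subset[OF _ assms(1)]] by blast
    obtain h0 where h0: "bij_betw h0 {i. enat i < ecard S0} S0"
      using enum_ecard[OF countable_subset[OF _ assms(1)]] by blast
    have gim: "g0 ` {i. enat i < ecard S} = S" using g0 by (simp add: bij_betw_def)
    have him: "h0 ` {i. enat i < ecard S0} = S0" using h0 by (simp add: bij_betw_def)
    have Sinf: "\<forall>s\<in>S. infinite_order s" using S by (simp add: maximal_indep_def)
    have S0o: "\<forall>s\<in>S0. order_two s" using S0 by (simp add: maximal_indep_def)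
    have ginf: "\<forall>i. enat i < ecard S \<longrightarrow> infinite_order (g0 i)" using gim Sinf by blast
    have hsoc: "\<forall>i. enat i < ecard S0 \<longrightarrow> h0 i \<in> socle"
      using him S0o unfolding socle_def order_two_def by blast
    have mx: "maximal_indep (\<lambda>_. True) (g0 ` {i. enat i < ecard S} \<union> h0 ` {i. enat i < ecard S0})"
      unfolding gim him by (rule union_max[OF S S0 q2])
    obtain f :: "'a \<Rightarrow> (nat \<Rightarrow> rat) \<times> (nat \<Rightarrow> rat)" where f: "monomorphism_into (ecard S) (ecard S0) f"
      and fg: "\<forall>i. enat i < ecard S \<longrightarrow> f (g0 i) = ((\<lambda>j. if j = i then 1 else 0), (\<lambda>_. 0))"
      using core[OF bij_betw_imp_inj_on[OF g0] bij_betw_imp_inj_on[OF h0] mx ginf hsoc] q2 gim by auto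
    have "ecard S \<le> ecard S'"
    proof (cases "finite S'")
      case False then show ?thesis by (simp add: ecard_def)
    next
      case True
      have bound: "n \<le> card S'" if n: "enat n \<le> ecard S" for n
      proof -
        have "card {..<n} \<le> card S'"
        proof (rule rank_bound[where f=f and g=g0])
          show "f (x + y) = target_add (f x) (f y)" for x y using f by (simp add: monomorphism_into_def)
        next
          fix i assume "i \<in> {..<n}"
          then have "enat i < ecard S" using n by (metis lessThan_iff enat_ord_simps(2) order_less_le_trans)
          then show "fst (f (g0 i)) = (\<lambda>j. if j = i then 1 else 0)" "infinite_order (g0 i)"
            using fg ginf by auto
        qed (use S' True in auto)
        then show ?thesis by simp
      qed
      show ?thesis
      proof (cases "ecard S")
        case (enat a)
        then have "a \<le> card S'" using bound by simp
        then show ?thesis using enat True by (simp add: ecard_def)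
      next
        case infinity
        then have "Suc (card S') \<le> card S'" using bound by simp
        then show ?thesis by simp
      qed
    qed
    then have "target (ecard S) (ecard S0) \<subseteq> target (r0 TYPE('a)) (r2 TYPE('a))"
      using r0e r2e by (intro target_mono) auto
    then have "monomorphism_into (r0 TYPE('a)) (r2 TYPE('a)) f"
      using f unfolding monomorphism_into_def by blast
    then show ?thesis by blast
  qed
next
  show "inj_on g {i. enat i < r0 TYPE('a)} \<and>
          inj_on h {i. enat i < r2 TYPE('a)} \<and>
          maximal_indep (\<lambda>_. True) (g ` {i. enat i < r0 TYPE('a)} \<union> h ` {i. enat i < r2 TYPE('a)}) \<and>
          (\<forall>i. enat i < r0 TYPE('a) \<longrightarrow> infinite_order (g i)) \<and>
          (\<forall>i. enat i < r2 TYPE('a) \<longrightarrow> h i \<in> socle) \<and>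
          quotient_2primary (gen_subgroup (g ` {i. enat i < r0 TYPE('a)})) 
         \<longrightarrow> (\<exists>f::'a \<Rightarrow> (nat \<Rightarrow> rat) \<times> (nat \<Rightarrow> rat).
            monomorphism_into (r0 TYPE('a)) (r2 TYPE('a)) f \<and>
            (\<forall>i. enat i < r0 TYPE('a) \<longrightarrow> f (g i) = ((\<lambda>j. if j = i then 1 else 0), (\<lambda>_. 0))) \<and>
            (\<forall>i. enat i < r2 TYPE('a) \<longrightarrow> f (h i) = ((\<lambda>_. 0), (\<lambda>j. if j = i then 1/2 else 0))))"
    using core[of g "r0 TYPE('a)" h "r2 TYPE('a)"] by blast
qed

end
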